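(* Assume $f$ is globally Lipschitz and of linear growth: there are constants $L,C_f\ge0$ with $\|f(q_1)-f(q_2)\|\le L\|q_1-q_2\|$ and $\|f(q)\|\le C_f(1+\|q\|)$ for all $q_1,q_2,q\in\mathbb{R}^d$. Let $T>0$ and $k\in\mathbb{N}$. Then there is $h_0>0$ such that for all $h\le h_0$ with $N=T/h\in\mathbb{N}$, $$\sup_{n\in\{1,\dots,N\}}\mathbf{E}\big[\|P^h[n]\|^k+\|Q^h[n]\|^k\big]\le C<\infty,$$ where $C$ does not depend on $h$ (it depends on $T$, $k$, the initial value and the coefficients).
   Context: Let $d\le m$, $F\in C^\infty(\mathbb{R}^d,\mathbb{R})$, $f=\nabla F$, $M\in\mathbb{R}^{d\times d}$ symmetric positive definite, $v>0$, $\sigma=(\sigma_1,\dots,\sigma_m)\in\mathbb{R}^{d\times m}$, $W$ a standard $m$-dimensional Wiener process. For a step size $h>0$, $t_n=nh$, $\Delta_{n+1}W=W(t_{n+1})-W(t_n)$, the scheme started at a deterministic $(P^h[0],Q^h[0])=(p,q)$ is $$P^h[n+1]=e^{-vh}P^h[n]-\tfrac{h^2}{2}\nabla^2F(Q^h[n])MP^h[n+1]-h\big(1+\tfrac{vh}{2}\big)e^{-vh}f(Q^h[n])-\big(1+\tfrac{vh}{2}\big)e^{-vh}\sigma\Delta_{n+1}W,$$ $$Q^h[n+1]=Q^h[n]+h\big(1-\tfrac{vh}{2}\big)e^{vh}MP^h[n+1]+\tfrac{h^2}{2}Mf(Q^h[n])+\tfrac{h}{2}M\sigma\Delta_{n+1}W,$$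 with the first equation solved for $P^h[n+1]$. *)

theory Defs
  imports "HOL-Analysis.Analysis" "HOL-Probability.Probability"
begin

text \<open>Gradient and Hessian on R^d (vectors indexed by a finite type), via partial
  derivatives along the standard basis vectors.\<close>

definition grad :: "(real^'d \<Rightarrow> real) \<Rightarrow> real^'d \<Rightarrow> real^'d" where
  "grad F q = (\<chi> i. frechet_derivative F (at q) (axis i 1))"

definition hess :: "(real^'d \<Rightarrow> real) \<Rightarrow> real^'d \<Rightarrow> real^'d^'d" where
  "hess F q = (\<chi> i j. frechet_derivative (\<lambda>x. grad F x $ i) (at q) (axis j 1))"

text \<open>C-infinity: differentiable everywhere, and every partial derivative is again
  C-infinity (greatest fixed point, i.e. all iterated partials exist everywhere).\<close>

coinductive smooth_fun :: "(real^'d \<Rightarrow> real) \<Rightarrow> bool" where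
  "(\<forall>x. g differentiable (at x)) \<Longrightarrow>
   (\<forall>i. smooth_fun (\<lambda>x. frechet_derivative g (at x) (axis i 1))) \<Longrightarrow> smooth_fun g"

definition sym_pos_def_mat :: "real^'d^'d \<Rightarrow> bool" where
  "sym_pos_def_mat A \<longleftrightarrow> transpose A = A \<and> (\<forall>x. x \<noteq> 0 \<longrightarrow> x \<bullet> (A *v x) > 0)"

text \<open>Standard m-dimensional Wiener process on [0,\<infinity>) over the probability space \<Omega>:
  W(0) = 0 a.s., a.s. continuous paths, increments W t - W s (0 \<le> s < t) are
  N(0, (t-s) I_m) distributed, and increments over consecutive intervals of any
  finite partition are independent.\<close>

definition wiener_process :: "'a measure \<Rightarrow> (real \<Rightarrow> 'a \<Rightarrow> real^'m) \<Rightarrow> bool" where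
  "wiener_process \<Omega> W \<longleftrightarrow>
     prob_space \<Omega> \<and>
     (\<forall>t. W t \<in> borel_measurable \<Omega>) \<and>
     (AE \<omega> in \<Omega>. W 0 \<omega> = 0) \<and>
     (AE \<omega> in \<Omega>. continuous_on {0..} (\<lambda>t. W t \<omega>)) \<and>
     (\<forall>s t. 0 \<le> s \<longrightarrow> s < t \<longrightarrow>
        distributed \<Omega> lborel (\<lambda>\<omega>. W t \<omega> - W s \<omega>)
          (\<lambda>x. ennreal (\<Prod>i\<in>UNIV. normal_density 0 (sqrt (t - s)) (x $ i)))) \<and>
     (\<forall>(ts :: nat \<Rightarrow> real) n. 0 \<le> ts 0 \<longrightarrow> (\<forall>i<n. ts i < ts (Suc i)) \<longrightarrow>
        prob_space.indep_vars \<Omega> (\<lambda>_. borel)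
          (\<lambda>i \<omega>. W (ts (Suc i)) \<omega> - W (ts i) \<omega>) {..<n})"

text \<open>The numerical scheme; component 1 is P^h[n], component 2 is Q^h[n].
  The implicit first equation
  (I + h^2/2 Hess F(Q_n) M) P_{n+1} = RHS is solved by applying the matrix inverse.\<close>

primrec scheme ::
  "real \<Rightarrow> real \<Rightarrow> real^'d^'d \<Rightarrow> real^'m^'d \<Rightarrow> (real^'d \<Rightarrow> real) \<Rightarrow>
   real^'d \<Rightarrow> real^'d \<Rightarrow> (real \<Rightarrow> 'a \<Rightarrow> real^'m) \<Rightarrow> nat \<Rightarrow> 'a \<Rightarrow> (real^'d) \<times> (real^'d)" where
  "scheme h v M \<sigma> F p q W 0 \<omega> = (p, q)"
| "scheme h v M \<sigma> F p q W (Suc n) \<omega> =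
     (let PQ = scheme h v M \<sigma> F p q W n \<omega>; P = fst PQ; Q = snd PQ;
          dW = W (real (Suc n) * h) \<omega> - W (real n * h) \<omega>;
          A = mat 1 + (h^2 / 2) *\<^sub>R (hess F Q ** M);
          Pn = matrix_inv A *v
                 (exp (- v * h) *\<^sub>R P
                  - (h * (1 + v * h / 2) * exp (- v * h)) *\<^sub>R grad F Q
                  - ((1 + v * h / 2) * exp (- v * h)) *\<^sub>R (\<sigma> *v dW));
          Qn = Q + (h * (1 - v * h / 2) * exp (v * h)) *\<^sub>R (M *v Pn)
                 + (h^2 / 2) *\<^sub>R (M *v grad F Q)
                 + (h / 2) *\<^sub>R (M *v (\<sigma> *v dW))
      in (Pn, Qn))"

end

theory Submission
  imports Defs
begin


lemma norm_pow_le_vec: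
  fixes x :: "real^'m"
  shows "norm x ^ k \<le> real CARD('m) ^ k * (\<Sum>i\<in>UNIV. 1 + (x $ i) ^ (2*k))"
proof -
  obtain j where j: "\<forall>i. \<bar>x $ i\<bar> \<le> \<bar>x $ j\<bar>"
  proof -
    have "Max (range (\<lambda>i. \<bar>x $ i\<bar>)) \<in> range (\<lambda>i. \<bar>x $ i\<bar>)" by (rule Max_in) auto
    then obtain j where "Max (range (\<lambda>i. \<bar>x $ i\<bar>)) = \<bar>x $ j\<bar>" by (metis (no_types, lifting) imageE)
    moreover have "\<forall>i. \<bar>x $ i\<bar> \<le> Max (range (\<lambda>i. \<bar>x $ i\<bar>))" by (auto intro: Max_ge)
    ultimately show ?thesis using that by metis
  qed
  have "norm x \<le> (\<Sum>i\<in>UNIV. \<bar>x $ i\<bar>)" by (rule norm_le_l1_cart)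
  also have "\<dots> \<le> (\<Sum>i\<in>(UNIV::'m set). \<bar>x $ j\<bar>)" by (rule sum_mono) (use j in auto)
  also have "\<dots> = real CARD('m) * \<bar>x $ j\<bar>" by simp
  finally have "norm x ^ k \<le> (real CARD('m) * \<bar>x $ j\<bar>) ^ k" by (rule power_mono) simp
  also have "\<dots> = real CARD('m) ^ k * \<bar>x $ j\<bar> ^ k" by (simp add: power_mult_distrib)
  also have "\<bar>x $ j\<bar> ^ k \<le> 1 + (x $ j) ^ (2*k)"
  proof (cases "\<bar>x $ j\<bar> \<le> 1")
    case True then have "\<bar>x $ j\<bar> ^ k \<le> 1" by (simp add: power_le_one)
    moreover have "0 \<le> (x $ j) ^ (2*k)" by (simp add: power_mult)
    ultimately show ?thesis by linarith
  next
    case False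
    then have "\<bar>x $ j\<bar> ^ k \<le> \<bar>x $ j\<bar> ^ (2*k)" by (intro power_increasing) auto
    also have "\<dots> = (x $ j) ^ (2*k)" by (simp add: power_mult power2_abs)
    finally show ?thesis by simp
  qed
  also have "1 + (x $ j) ^ (2*k) \<le> (\<Sum>i\<in>UNIV. 1 + (x $ i) ^ (2*k))"
    by (rule member_le_sum) (auto simp: power_mult zero_le_even_power)
  finally show ?thesis by (simp add: mult_left_mono)
qed

lemma nn_int_normal_one: "0 < s \<Longrightarrow> (\<integral>\<^sup>+y. ennreal (normal_density 0 s y) \<partial>lborel) = 1"
  by (subst nn_integral_eq_integral) auto

lemma nn_int_normal_mom:
  assumes s: "0 < s"
  shows "(\<integral>\<^sup>+y. ennreal (normal_density 0 s y * (1 + y ^ (2*k))) \<partial>lborel)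
          = ennreal (1 + fact (2 * k) / ((2 / s\<^sup>2)^k * fact k))"
proof -
  have i1: "integrable lborel (\<lambda>y. normal_density 0 s y * (y - 0) ^ (2*k))"
    by (rule integrable_normal_moment[OF s])
  have e1: "(\<integral>y. normal_density 0 s y * (y - 0) ^ (2*k) \<partial>lborel) = fact (2 * k) / ((2 / s\<^sup>2)^k * fact k)"
    using integral_normal_moment_even[OF s, where k=k and \<mu>=0] by simp
  have int: "integrable lborel (\<lambda>y. normal_density 0 s y * (1 + y ^ (2*k)))"
    using Bochner_Integration.integrable_add[OF integrable_normal_density[OF s] i1] by (simp add: distrib_left)
  have "(\<integral>y. normal_density 0 s y * (1 + y ^ (2*k)) \<partial>lborel)
     = (\<integral>y. normal_density 0 s y \<partial>lborel) + (\<integral>y. normal_density 0 s y * (y - 0) ^ (2*k) \<partial>lborel)"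
    using i1 Bochner_Integration.integral_add[OF integrable_normal_density[OF s], of "\<lambda>y. normal_density 0 s y * y ^ (2*k)"]
    by (simp add: distrib_left integral_normal_density[OF s])
  also have "\<dots> = 1 + fact (2 * k) / ((2 / s\<^sup>2)^k * fact k)" using e1 by (simp add: integral_normal_density[OF s])
  finally show ?thesis
    using int by (subst nn_integral_eq_integral) (auto simp: power_mult)
qed

lemma gauss_vec_moment:
  fixes X :: "'a \<Rightarrow> real^'m"
  assumes D: "distributed \<Omega> lborel X (\<lambda>x. ennreal (\<Prod>i\<in>UNIV. normal_density 0 s (x $ i)))"
    and s: "0 < s"
  shows "(\<integral>\<^sup>+\<omega>. ennreal (norm (X \<omega>) ^ k) \<partial>\<Omega>)
          \<le> ennreal (real CARD('m) ^ k * (real CARD('m) * (1 + fact (2 * k) * s ^ (2 * k))))"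
proof -
  define dens where "dens = (\<lambda>x::real^'m. (\<Prod>i\<in>UNIV. normal_density 0 s (x $ i)))"
  define c where "c = 1 + fact (2 * k) / ((2 / s\<^sup>2)^k * fact k)"
  have c_le: "c \<le> 1 + fact (2 * k) * s ^ (2 * k)"
  proof -
    have "fact (2 * k) / ((2 / s\<^sup>2)^k * fact k) = fact (2 * k) * s ^ (2*k) / (2^k * fact k)"
    proof -
      have "(2 / s\<^sup>2)^k = 2^k / s^(2*k)" by (simp add: power_divide power_mult)
      then show ?thesis using s by (simp add: field_simps)
    qed
    also have "\<dots> \<le> fact (2 * k) * s ^ (2*k)"
    proof -
      have "1 \<le> (2::real)^k * fact k"
        using fact_ge_1[of k, where 'a=real] one_le_power[of "2::real" k] by (metis mult_mono' one_le_numeral zero_le_one mult_1)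
      moreover have "0 \<le> fact (2 * k) * s ^ (2*k)" using s by simp
      ultimately show ?thesis
        by (subst pos_divide_le_eq) (auto intro: mult_left_le[where c="(2::real)^k * fact k", simplified mult.commute] simp: mult_le_cancel_left1 s less_le_not_le)
    qed
    finally show ?thesis unfolding c_def by simp
  qed
  have "(\<integral>\<^sup>+\<omega>. ennreal (norm (X \<omega>) ^ k) \<partial>\<Omega>) = (\<integral>\<^sup>+x. ennreal (dens x) * ennreal (norm x ^ k) \<partial>lborel)"
    unfolding dens_def by (rule distributed_nn_integral[OF D, symmetric]) measurable
  also have "\<dots> \<le> (\<integral>\<^sup>+x. ennreal (real CARD('m) ^ k) * (\<Sum>i\<in>UNIV. ennreal (dens x * (1 + (x $ i) ^ (2*k)))) \<partial>lborel)"
  proof (rule nn_integral_mono)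
    fix x :: "real^'m"
    have dn: "0 \<le> dens x" unfolding dens_def by (simp add: prod_nonneg)
    have "ennreal (dens x) * ennreal (norm x ^ k) = ennreal (dens x * norm x ^ k)"
      using dn by (simp add: ennreal_mult)
    also have "\<dots> \<le> ennreal (dens x * (real CARD('m) ^ k * (\<Sum>i\<in>UNIV. 1 + (x $ i) ^ (2*k))))"
      using dn norm_pow_le_vec[of x k] by (intro ennreal_leI mult_left_mono) auto
    also have "\<dots> = ennreal (real CARD('m) ^ k) * (\<Sum>i\<in>UNIV. ennreal (dens x * (1 + (x $ i) ^ (2*k))))"
      using dn by (simp add: ennreal_mult sum_distrib_left mult_ac power_mult zero_le_even_power
                      flip: sum_ennreal)
    finally show "ennreal (dens x) * ennreal (norm x ^ k) \<le> \<dots>" .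
  qed
  also have "\<dots> = ennreal (real CARD('m) ^ k) * (\<Sum>i\<in>UNIV. (\<integral>\<^sup>+x. ennreal (dens x * (1 + (x $ i) ^ (2*k))) \<partial>lborel))"
    unfolding dens_def by (simp add: nn_integral_cmult nn_integral_sum)
  also have "(\<lambda>i. (\<integral>\<^sup>+x. ennreal (dens x * (1 + (x $ i) ^ (2*k))) \<partial>lborel)) = (\<lambda>i. ennreal c)"
  proof
    fix i :: 'm
    define f where "f = (\<lambda>b::real^'m. \<lambda>y::real. ennreal (normal_density 0 s y * (if b = axis i 1 then 1 + y ^ (2*k) else 1)))"
    have "(\<lambda>x. ennreal (dens x * (1 + (x $ i) ^ (2*k)))) = (\<lambda>x. \<Prod>b\<in>Basis. f b (x \<bullet> b))"
    proof
      fix x :: "real^'m"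
      have inj: "inj (\<lambda>j::'m. axis j (1::real))" by (auto simp: inj_def axis_eq_axis)
      have "(\<Prod>b\<in>Basis. f b (x \<bullet> b)) = (\<Prod>j\<in>UNIV. f (axis j 1) (x $ j))"
      proof -
        have B: "(Basis :: (real^'m) set) = range (\<lambda>j. axis j 1)" by (auto simp: Basis_vec_def)
        show ?thesis unfolding B
        by (subst prod.reindex) (auto simp: inj_def axis_eq_axis cart_eq_inner_axis inner_commute)
      qed
      also have "\<dots> = (\<Prod>j\<in>UNIV. ennreal (normal_density 0 s (x $ j) * (if j = i then 1 + (x $ j) ^ (2*k) else 1)))"
        unfolding f_def by (simp add: axis_eq_axis)
      also have "\<dots> = ennreal (\<Prod>j\<in>UNIV. normal_density 0 s (x $ j) * (if j = i then 1 + (x $ j) ^ (2*k) else 1))"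
        by (rule prod_ennreal) (auto simp: power_mult zero_le_even_power)
      also have "(\<Prod>j\<in>UNIV. normal_density 0 s (x $ j) * (if j = i then 1 + (x $ j) ^ (2*k) else 1))
           = dens x * (\<Prod>j\<in>UNIV. (if j = i then 1 + (x $ j) ^ (2*k) else 1))"
        unfolding dens_def by (simp add: prod.distrib)
      also have "(\<Prod>j\<in>UNIV. (if j = i then 1 + (x $ j) ^ (2*k) else 1)) = 1 + (x $ i) ^ (2*k)"
        by (simp add: prod.delta)
      finally show "ennreal (dens x * (1 + (x $ i) ^ (2*k))) = (\<Prod>b\<in>Basis. f b (x \<bullet> b))" by simp
    qed
    then have "(\<integral>\<^sup>+x. ennreal (dens x * (1 + (x $ i) ^ (2*k))) \<partial>lborel) = (\<integral>\<^sup>+x. (\<Prod>b\<in>Basis. f b (x \<bullet> b)) \<partial>lborel)"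
      by simp
    also have "\<dots> = (\<Prod>b\<in>Basis. (\<integral>\<^sup>+y. f b y \<partial>lborel))"
      by (rule nn_integral_lborel_prod) (auto simp: f_def)
    also have "\<dots> = (\<Prod>b\<in>(Basis::(real^'m) set). if b = axis i (1::real) then ennreal c else 1)"
      by (rule prod.cong[OF refl]) (auto simp: f_def c_def nn_int_normal_mom[OF s] nn_int_normal_one[OF s])
    also have "\<dots> = ennreal c"
      by (subst prod.delta) (auto simp: Basis_vec_def)
    finally show "(\<integral>\<^sup>+x. ennreal (dens x * (1 + (x $ i) ^ (2*k))) \<partial>lborel) = ennreal c" .
  qed
  also have "ennreal (real CARD('m) ^ k) * (\<Sum>i\<in>(UNIV::'m set). ennreal c) = ennreal (real CARD('m) ^ k * (real CARD('m) * c))"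
  proof -
    have "0 \<le> c" unfolding c_def by simp
    then show ?thesis by (simp add: ennreal_mult ennreal_of_nat_eq_real_of_nat)
  qed
  also have "\<dots> \<le> ennreal (real CARD('m) ^ k * (real CARD('m) * (1 + fact (2 * k) * s ^ (2 * k))))"
    using c_le by (intro ennreal_leI mult_left_mono) auto
  finally show ?thesis .
qed



lemma mat_norm_bound:
  fixes A :: "real^'n^'m"
  shows "norm (A *v x) \<le> (\<Sum>i\<in>UNIV. \<Sum>j\<in>UNIV. \<bar>A$i$j\<bar>) * norm x"
proof -
  have "norm (A *v x) \<le> (\<Sum>i\<in>UNIV. \<bar>(A *v x) $ i\<bar>)" by (rule norm_le_l1_cart)
  also have "\<dots> \<le> (\<Sum>i\<in>UNIV. \<Sum>j\<in>UNIV. \<bar>A$i$j\<bar> * norm x)"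
  proof (rule sum_mono)
    fix i
    have "\<bar>(A *v x) $ i\<bar> = \<bar>\<Sum>j\<in>UNIV. A$i$j * x$j\<bar>" by (simp add: matrix_vector_mult_def)
    also have "\<dots> \<le> (\<Sum>j\<in>UNIV. \<bar>A$i$j * x$j\<bar>)" by (rule sum_abs)
    also have "\<dots> \<le> (\<Sum>j\<in>UNIV. \<bar>A$i$j\<bar> * norm x)"
      by (rule sum_mono) (simp add: abs_mult mult_left_mono component_le_norm_cart)
    finally show "\<bar>(A *v x) $ i\<bar> \<le> (\<Sum>j\<in>UNIV. \<bar>A$i$j\<bar> * norm x)" .
  qed
  also have "\<dots> = (\<Sum>i\<in>UNIV. \<Sum>j\<in>UNIV. \<bar>A$i$j\<bar>) * norm x"
    by (simp add: sum_distrib_right)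
  finally show ?thesis .
qed

lemma inv_step:
  fixes E :: "real^'n^'n"
  assumes E: "\<forall>x. norm (E *v x) \<le> e * norm x" and e: "e \<le> 1/2"
  shows "matrix_inv (mat 1 + E) *v y + E *v (matrix_inv (mat 1 + E) *v y) = y"
proof -
  define A where "A = mat 1 + E"
  have ker: "\<forall>x. A *v x = 0 \<longrightarrow> x = 0"
  proof (intro allI impI)
    fix x assume "A *v x = 0"
    then have "x = - (E *v x)" unfolding A_def by (simp add: algebra_simps matrix_vector_mul_lid eq_neg_iff_add_eq_0)
    then have "norm x = norm (E *v x)" by (metis norm_minus_cancel)
    also have "\<dots> \<le> e * norm x" using E by blast
    finally have "norm x \<le> e * norm x" .
    moreover have "e * norm x \<le> 1/2 * norm x" using e by (intro mult_right_mono) auto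
    ultimately have "norm x \<le> 0" by linarith
    then show "x = 0" by simp
  qed
  then have "invertible A" using matrix_left_invertible_ker invertible_left_inverse by blast
  then have "A ** matrix_inv A = mat 1"
    unfolding invertible_def matrix_inv_def by (rule someI_ex[THEN conjunct1])
  then have "A *v (matrix_inv A *v y) = y" by (simp add: matrix_vector_mul_assoc matrix_vector_mul_lid)
  then show ?thesis unfolding A_def by (simp add: algebra_simps matrix_vector_mul_lid)
qed

lemma deriv_lip_bound:
  fixes g :: "'a::real_normed_vector \<Rightarrow> real"
  assumes D: "(g has_derivative D) (at q)"
    and lip: "\<forall>y. \<bar>g y - g q\<bar> \<le> L * norm (y - q)"
  shows "\<bar>D u\<bar> \<le> L * norm u"
proof -
  have l: "linear D" using D has_derivative_linear by blast
  have "((\<lambda>t. q + t *\<^sub>R u) has_derivative (\<lambda>t. t *\<^sub>R u)) (at 0)"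
    by (auto intro!: derivative_eq_intros)
  then have "((\<lambda>t. g (q + t *\<^sub>R u)) has_derivative (\<lambda>t. D (t *\<^sub>R u))) (at 0)"
    using has_derivative_compose[of "\<lambda>t. q + t *\<^sub>R u" _ 0 UNIV g D] D by (simp add: comp_def)
  then have "((\<lambda>t. g (q + t *\<^sub>R u)) has_derivative (\<lambda>t. t * D u)) (at 0)"
    using l by (simp add: linear_scale)
  then have "((\<lambda>t. g (q + t *\<^sub>R u)) has_field_derivative D u) (at 0)"
  proof -
    have "(\<lambda>t. t * D u) = (*) (D u)" by (auto simp: fun_eq_iff)
    then show ?thesis using \<open>((\<lambda>t. g (q + t *\<^sub>R u)) has_derivative (\<lambda>t. t * D u)) (at 0)\<close>
      by (simp add: has_field_derivative_def)
  qed
  then have lim: "((\<lambda>t. (g (q + t *\<^sub>R u) - g (q + 0 *\<^sub>R u)) / (t - 0)) \<longlongrightarrow> D u) (at 0)"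
    by (simp add: has_field_derivative_iff)
  have "norm (D u) \<le> L * norm u"
  proof (rule Lim_norm_ubound[OF _ lim])
    show "\<not> trivial_limit (at (0::real))" by simp
    show "\<forall>\<^sub>F t in at 0. norm ((g (q + t *\<^sub>R u) - g (q + 0 *\<^sub>R u)) / (t - 0)) \<le> L * norm u"
    proof (rule eventually_at_filter[THEN iffD2], intro always_eventually allI impI)
      fix t :: real assume t: "t \<noteq> 0"
      have "\<bar>g (q + t *\<^sub>R u) - g q\<bar> \<le> L * norm (t *\<^sub>R u)" using lip[rule_format, of "q + t *\<^sub>R u"] by simp
      then have "\<bar>g (q + t *\<^sub>R u) - g q\<bar> \<le> \<bar>t\<bar> * (L * norm u)" by (simp add: mult_ac)
      then show "norm ((g (q + t *\<^sub>R u) - g (q + 0 *\<^sub>R u)) / (t - 0)) \<le> L * norm u"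
        using t by (simp add: abs_divide divide_le_eq mult_ac)
    qed
  qed
  then show ?thesis by simp
qed

lemma hess_entry_bound:
  assumes F: "smooth_fun F"
    and lip: "\<forall>q1 q2. norm (grad F q1 - grad F q2) \<le> L * norm (q1 - q2)"
  shows "\<bar>hess F q $ i $ j\<bar> \<le> L"
proof -
  define g where "g = (\<lambda>x. frechet_derivative F (at x) (axis i 1))"
  have gg: "(\<lambda>x. grad F x $ i) = g" unfolding g_def grad_def by simp
  from F have "smooth_fun g" unfolding g_def by (cases rule: smooth_fun.cases) blast
  then have "g differentiable (at q)" by (cases rule: smooth_fun.cases) blast
  then have D: "(g has_derivative frechet_derivative g (at q)) (at q)" by (rule frechet_derivative_works[THEN iffD1])
  have "\<forall>y. \<bar>g y - g q\<bar> \<le> L * norm (y - q)"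
  proof
    fix y
    have "\<bar>g y - g q\<bar> = \<bar>(grad F y - grad F q) $ i\<bar>" unfolding gg[symmetric] by simp
    also have "\<dots> \<le> norm (grad F y - grad F q)" by (rule component_le_norm_cart)
    also have "\<dots> \<le> L * norm (y - q)" using lip by blast
    finally show "\<bar>g y - g q\<bar> \<le> L * norm (y - q)" .
  qed
  from deriv_lip_bound[OF D this, of "axis j 1"]
  have "\<bar>frechet_derivative g (at q) (axis j 1)\<bar> \<le> L" by simp
  then show ?thesis unfolding hess_def gg[symmetric] by simp
qed



lemma tri3m: fixes x y z :: "'a::real_normed_vector" shows "norm (x - y - z) \<le> norm x + norm y + norm z"
  using norm_triangle_ineq4[of "x - y" z] norm_triangle_ineq4[of x y] by linarith

lemma tri3p: fixes x y z :: "'a::real_normed_vector" shows "norm (x + y + z) \<le> norm x + norm y + norm z"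
  using norm_triangle_ineq[of "x + y" z] norm_triangle_ineq[of x y] by linarith

lemma alg1: "(a *\<^sub>R P - b *\<^sub>R F - c *\<^sub>R (D1 - D0) - EP) + (a *\<^sub>R Y - ((1 - a) * c) *\<^sub>R D0) + c *\<^sub>R D1
   = a *\<^sub>R (P + Y + c *\<^sub>R D0) - b *\<^sub>R F - (EP::real^'d)"
  by (simp add: vec_eq_iff algebra_simps)

lemma alg2: fixes M :: "real^'d^'d" shows "(Q + e *\<^sub>R (M *v P) + (h^2/2) *\<^sub>R (M *v F) + (h/2) *\<^sub>R (M *v (D1 - D0))) - (h/2) *\<^sub>R (M *v D1)
   = (Q - (h/2) *\<^sub>R (M *v D0)) + e *\<^sub>R (M *v P) + (h^2/2) *\<^sub>R (M *v F)"
  by (simp add: matrix_vector_mult_diff_distrib vec_eq_iff algebra_simps)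

lemma det_bound:
  fixes P Q D :: "nat \<Rightarrow> real^'d" and f :: "real^'d \<Rightarrow> real^'d"
    and E :: "nat \<Rightarrow> real^'d^'d" and M :: "real^'d^'d"
  assumes r1: "\<And>n. P (Suc n) + E n *v P (Suc n) = a *\<^sub>R P n - b *\<^sub>R f (Q n) - c *\<^sub>R (D (Suc n) - D n)"
    and r2: "\<And>n. Q (Suc n) = Q n + e *\<^sub>R (M *v P (Suc n)) + (h^2/2) *\<^sub>R (M *v f (Q n)) + (h/2) *\<^sub>R (M *v (D (Suc n) - D n))"
    and P0: "P 0 = p" and Q0: "Q 0 = q" and D0: "D 0 = 0"
    and Eb: "\<And>n x. norm (E n *v x) \<le> \<epsilon> * norm x" and eps: "0 \<le> \<epsilon>" "\<epsilon> \<le> h" "\<epsilon> \<le> 1/2"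
    and h: "0 < h" "h \<le> 1"
    and a: "0 \<le> a" "a \<le> 1" "1 - a \<le> v * h" and c: "0 \<le> c" "c \<le> 1" and b: "0 \<le> b" "b \<le> h"
    and e: "\<bar>e\<bar> \<le> h * eV" and eV: "0 \<le> eV"
    and fb: "\<And>x. norm (f x) \<le> Cf * (1 + norm x)" and Cf: "0 \<le> Cf"
    and Mb: "\<And>x. norm (M *v x) \<le> m0 * norm x" and m0: "0 \<le> m0" and v: "0 \<le> v"
    and K: "K = Cf*(1+m0)*(1+m0) + 2*(2 + Cf*(1+m0))*(1 + eV*m0) + v"
  shows "norm (P n) + norm (Q n) \<le> (1 + h*K)^n * (norm p + norm q + h*K*(\<Sum>j<n. 1 + norm (D j) + norm (D (Suc j)))) + (1+m0) * norm (D n)"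
proof -
  define Y where "Y = (\<lambda>n. rec_nat 0 (\<lambda>m y. a *\<^sub>R y - ((1 - a) * c) *\<^sub>R D m) n)"
  have Y0: "Y 0 = 0" and YS: "\<And>n. Y (Suc n) = a *\<^sub>R Y n - ((1 - a) * c) *\<^sub>R D n"
    by (simp_all add: Y_def)
  define U where "U = (\<lambda>n. P n + Y n + c *\<^sub>R D n)"
  define V where "V = (\<lambda>n. Q n - (h/2) *\<^sub>R (M *v D n))"
  define R where "R = (\<lambda>n. norm (U n) + norm (V n) + norm (Y n))"
  define G where "G = (\<lambda>n. norm (D n) + norm (D (Suc n)))"
  define F1 where "F1 = Cf * (1 + m0)"
  define P1 where "P1 = 2 * (2 + F1)"
  have F1: "0 \<le> F1" unfolding F1_def using Cf m0 by simp
  have P1: "0 \<le> P1" unfolding P1_def using F1 by simp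
  have KK: "K = F1 * (1 + m0) + P1 * (1 + eV * m0) + v" unfolding K F1_def P1_def by simp
  have K0: "0 \<le> K" unfolding KK using F1 P1 eV m0 v by simp
  have Rnn: "0 \<le> R n" for n unfolding R_def by simp
  have Gnn: "0 \<le> G n" for n unfolding G_def by simp
  have step: "R (Suc n) \<le> R n + h * K * (1 + R n + G n)" for n
  proof -
    define X where "X = 1 + R n + G n"
    have X1: "1 \<le> X" unfolding X_def using Rnn[of n] Gnn[of n] by simp
    have Pe: "P (Suc n) = a *\<^sub>R P n - b *\<^sub>R f (Q n) - c *\<^sub>R (D (Suc n) - D n) - E n *v P (Suc n)"
    proof -
      have "P (Suc n) = (P (Suc n) + E n *v P (Suc n)) - E n *v P (Suc n)" by simp
      also have "\<dots> = a *\<^sub>R P n - b *\<^sub>R f (Q n) - c *\<^sub>R (D (Suc n) - D n) - E n *v P (Suc n)"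
        by (simp only: r1)
      finally show ?thesis .
    qed
    have Ueq: "U (Suc n) = a *\<^sub>R U n - b *\<^sub>R f (Q n) - E n *v P (Suc n)"
    proof -
      have "U (Suc n) = (a *\<^sub>R P n - b *\<^sub>R f (Q n) - c *\<^sub>R (D (Suc n) - D n) - E n *v P (Suc n))
          + (a *\<^sub>R Y n - ((1 - a) * c) *\<^sub>R D n) + c *\<^sub>R D (Suc n)"
        unfolding U_def YS using Pe by metis
      also have "\<dots> = a *\<^sub>R U n - b *\<^sub>R f (Q n) - E n *v P (Suc n)"
        unfolding U_def by (rule alg1)
      finally show ?thesis .
    qed
    have Veq: "V (Suc n) = V n + e *\<^sub>R (M *v P (Suc n)) + (h^2/2) *\<^sub>R (M *v f (Q n))"
      unfolding V_def r2 by (rule alg2)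
    have nDD: "norm (D (Suc n) - D n) \<le> G n" unfolding G_def using norm_triangle_ineq4[of "D (Suc n)" "D n"] by simp
    have nMD: "norm (M *v D n) \<le> m0 * G n"
    proof -
      have "norm (M *v D n) \<le> m0 * norm (D n)" by (rule Mb)
      also have "\<dots> \<le> m0 * G n" unfolding G_def using m0 by (intro mult_left_mono) auto
      finally show ?thesis .
    qed
    have nQ: "norm (Q n) \<le> R n + m0 * G n"
    proof -
      have "Q n = V n + (h/2) *\<^sub>R (M *v D n)" unfolding V_def by simp
      then have "norm (Q n) \<le> norm (V n) + norm ((h/2) *\<^sub>R (M *v D n))" using norm_triangle_ineq[of "V n" "(h/2) *\<^sub>R (M *v D n)"] by simp
      also have "norm ((h/2) *\<^sub>R (M *v D n)) = (h/2) * norm (M *v D n)" using h by simp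
      also have "\<dots> \<le> 1 * norm (M *v D n)" using h by (intro mult_right_mono) auto
      finally have "norm (Q n) \<le> norm (V n) + 1 * norm (M *v D n)" by simp
      then show ?thesis using nMD norm_ge_zero[of "U n"] norm_ge_zero[of "Y n"] unfolding R_def by linarith
    qed
    have nf: "norm (f (Q n)) \<le> F1 * X"
    proof -
      have "norm (f (Q n)) \<le> Cf * (1 + norm (Q n))" by (rule fb)
      also have "\<dots> \<le> Cf * (1 + R n + m0 * G n)" using nQ Cf by (intro mult_left_mono) auto
      also have "1 + R n + m0 * G n \<le> (1 + m0) * X"
        unfolding X_def using Rnn[of n] Gnn[of n] m0 by (simp add: algebra_simps)
      also have "Cf * ((1 + m0) * X) = F1 * X" unfolding F1_def by simp
      finally show ?thesis using Cf by (simp add: mult_left_mono)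
    qed
    have nP: "norm (P n) \<le> R n + G n"
    proof -
      have "P n = U n - Y n - c *\<^sub>R D n" unfolding U_def by simp
      then have "norm (P n) \<le> norm (U n) + norm (Y n) + norm (c *\<^sub>R D n)"
        using tri3m[of "U n" "Y n" "c *\<^sub>R D n"] by simp
      also have "norm (c *\<^sub>R D n) \<le> norm (D n)" using c by (simp add: mult_left_le_one_le)
      finally have "norm (P n) \<le> norm (U n) + norm (Y n) + norm (D n)" by simp
      then show ?thesis unfolding R_def G_def using norm_ge_zero[of "V n"] norm_ge_zero[of "D (Suc n)"] by linarith
    qed
    define y where "y = a *\<^sub>R P n - b *\<^sub>R f (Q n) - c *\<^sub>R (D (Suc n) - D n)"
    have ny: "norm y \<le> R n + 2 * G n + F1 * X"
    proof -
      have "norm y \<le> norm (a *\<^sub>R P n) + norm (b *\<^sub>R f (Q n)) + norm (c *\<^sub>R (D (Suc n) - D n))"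
        unfolding y_def by (rule tri3m)
      also have "norm (a *\<^sub>R P n) \<le> norm (P n)" using a by (simp add: mult_left_le_one_le)
      also have "norm (b *\<^sub>R f (Q n)) \<le> norm (f (Q n))" using b h by (simp add: mult_left_le_one_le)
      also have "norm (c *\<^sub>R (D (Suc n) - D n)) \<le> norm (D (Suc n) - D n)" using c by (simp add: mult_left_le_one_le)
      finally show ?thesis using nP nf nDD by simp
    qed
    have nP': "norm (P (Suc n)) \<le> P1 * X"
    proof -
      have "P (Suc n) = y - E n *v P (Suc n)" unfolding y_def using Pe by simp
      then have "norm (P (Suc n)) \<le> norm y + norm (E n *v P (Suc n))" using norm_triangle_ineq4[of y "E n *v P (Suc n)"] by simp
      also have "\<dots> \<le> norm y + \<epsilon> * norm (P (Suc n))" using Eb by (simp add: add_left_mono)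
      also have "\<epsilon> * norm (P (Suc n)) \<le> 1/2 * norm (P (Suc n))" using eps by (intro mult_right_mono) auto
      finally have "norm (P (Suc n)) \<le> 2 * norm y" by simp
      also have "\<dots> \<le> 2 * (R n + 2 * G n + F1 * X)" using ny by simp
      also have "\<dots> \<le> P1 * X" unfolding P1_def X_def using Rnn[of n] Gnn[of n] F1
        by (simp add: algebra_simps)
      finally show ?thesis .
    qed
    have nU: "norm (U (Suc n)) \<le> norm (U n) + h * (F1 * X) + h * (P1 * X)"
    proof -
      have "norm (U (Suc n)) \<le> norm (a *\<^sub>R U n) + norm (b *\<^sub>R f (Q n)) + norm (E n *v P (Suc n))"
        unfolding Ueq by (rule tri3m)
      also have "norm (a *\<^sub>R U n) \<le> norm (U n)" using a by (simp add: mult_left_le_one_le)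
      also have "norm (b *\<^sub>R f (Q n)) \<le> h * (F1 * X)"
      proof -
        have "norm (b *\<^sub>R f (Q n)) = b * norm (f (Q n))" using b by simp
        also have "\<dots> \<le> h * (F1 * X)" using b nf by (intro mult_mono) auto
        finally show ?thesis .
      qed
      also have "norm (E n *v P (Suc n)) \<le> h * (P1 * X)"
      proof -
        have "norm (E n *v P (Suc n)) \<le> \<epsilon> * norm (P (Suc n))" by (rule Eb)
        also have "\<dots> \<le> h * (P1 * X)" using eps nP' by (intro mult_mono) auto
        finally show ?thesis .
      qed
      finally show ?thesis by simp
    qed
    have nV: "norm (V (Suc n)) \<le> norm (V n) + h * (eV * m0 * (P1 * X)) + h * (m0 * (F1 * X))"
    proof -
      have "norm (V (Suc n)) \<le> norm (V n) + norm (e *\<^sub>R (M *v P (Suc n))) + norm ((h^2/2) *\<^sub>R (M *v f (Q n)))"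
        unfolding Veq by (rule tri3p)
      also have "norm (e *\<^sub>R (M *v P (Suc n))) \<le> h * (eV * m0 * (P1 * X))"
      proof -
        have "norm (e *\<^sub>R (M *v P (Suc n))) = \<bar>e\<bar> * norm (M *v P (Suc n))" by simp
        also have "\<dots> \<le> (h * eV) * (m0 * (P1 * X))"
        proof (rule mult_mono)
          show "norm (M *v P (Suc n)) \<le> m0 * (P1 * X)"
            using Mb[of "P (Suc n)"] nP' m0 by (meson mult_left_mono order_trans)
        qed (use e h eV m0 P1 X1 in auto)
        finally show ?thesis by (simp add: mult_ac)
      qed
      also have "norm ((h^2/2) *\<^sub>R (M *v f (Q n))) \<le> h * (m0 * (F1 * X))"
      proof -
        have "norm ((h^2/2) *\<^sub>R (M *v f (Q n))) = (h^2/2) * norm (M *v f (Q n))" by simp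
        also have "\<dots> \<le> h * (m0 * (F1 * X))"
        proof (rule mult_mono)
          show "h^2/2 \<le> h" using h by (simp add: power2_eq_square mult_left_le_one_le)
          show "norm (M *v f (Q n)) \<le> m0 * (F1 * X)"
            using Mb[of "f (Q n)"] nf m0 by (meson mult_left_mono order_trans)
        qed (use h in auto)
        finally show ?thesis .
      qed
      finally show ?thesis by simp
    qed
    have nY: "norm (Y (Suc n)) \<le> norm (Y n) + h * (v * X)"
    proof -
      have "norm (Y (Suc n)) \<le> norm (a *\<^sub>R Y n) + norm (((1 - a) * c) *\<^sub>R D n)"
        unfolding YS by (rule norm_triangle_ineq4)
      also have "norm (a *\<^sub>R Y n) \<le> norm (Y n)" using a by (simp add: mult_left_le_one_le)
      also have "norm (((1 - a) * c) *\<^sub>R D n) \<le> h * (v * X)"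
      proof -
        have "norm (((1 - a) * c) *\<^sub>R D n) = ((1 - a) * c) * norm (D n)" using a c by simp
        also have "\<dots> \<le> (v * h) * X"
        proof (rule mult_mono)
          have "(1 - a) * c \<le> 1 - a" using a c by (intro mult_left_le) auto
          then show "(1 - a) * c \<le> v * h" using a by linarith
          show "norm (D n) \<le> X" unfolding X_def G_def using Rnn[of n] by simp
        qed (use v h X1 in auto)
        finally show ?thesis by (simp add: mult_ac)
      qed
      finally show ?thesis by simp
    qed
    have "R (Suc n) \<le> R n + h * (F1 * X) + h * (P1 * X) + h * (eV * m0 * (P1 * X)) + h * (m0 * (F1 * X)) + h * (v * X)"
      using nU nV nY unfolding R_def by simp
    also have "\<dots> = R n + h * K * X" unfolding KK by (simp add: algebra_simps)
    finally show ?thesis unfolding X_def .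
  qed
  have R0: "R 0 = norm p + norm q" unfolding R_def U_def V_def by (simp add: Y0 D0 P0 Q0)
  have gron: "R n \<le> (1 + h*K)^n * (R 0 + h*K*(\<Sum>j<n. 1 + G j))" for n
  proof (induction n)
    case 0 then show ?case by simp
  next
    case (Suc n)
    have hK: "0 \<le> h * K" using h K0 by simp
    have pw: "1 \<le> (1 + h*K)^n" using hK by (intro one_le_power) simp
    have S0: "0 \<le> (\<Sum>j<n. 1 + G j)" using Gnn by (simp add: sum_nonneg)
    have "R (Suc n) \<le> (1 + h*K) * R n + h*K*(1 + G n)" using step[of n] by (simp add: algebra_simps)
    also have "\<dots> \<le> (1 + h*K) * ((1 + h*K)^n * (R 0 + h*K*(\<Sum>j<n. 1 + G j))) + h*K*(1 + G n)"
      using Suc.IH hK by (intro add_right_mono mult_left_mono) auto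
    also have "h*K*(1 + G n) \<le> (1 + h*K)^Suc n * (h*K*(1 + G n))"
    proof -
      have "1 \<le> (1 + h*K)^Suc n" using hK by (intro one_le_power) simp
      moreover have "0 \<le> h*K*(1 + G n)" using hK Gnn[of n] by simp
      ultimately show ?thesis by (simp add: mult_le_cancel_right1)
    qed
    finally show ?case by (simp add: algebra_simps)
  qed
  have fin: "norm (P n) + norm (Q n) \<le> R n + (1 + m0) * norm (D n)"
  proof -
    have "norm (P n) \<le> norm (U n) + norm (Y n) + norm (c *\<^sub>R D n)"
    proof -
      have "P n = U n - Y n - c *\<^sub>R D n" unfolding U_def by simp
      then show ?thesis using tri3m[of "U n" "Y n" "c *\<^sub>R D n"] by simp
    qed
    also have "norm (c *\<^sub>R D n) \<le> norm (D n)" using c by (simp add: mult_left_le_one_le)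
    finally have a1: "norm (P n) \<le> norm (U n) + norm (Y n) + norm (D n)" by simp
    have "norm (Q n) \<le> norm (V n) + norm ((h/2) *\<^sub>R (M *v D n))"
    proof -
      have "Q n = V n + (h/2) *\<^sub>R (M *v D n)" unfolding V_def by simp
      then show ?thesis using norm_triangle_ineq[of "V n" "(h/2) *\<^sub>R (M *v D n)"] by simp
    qed
    also have "norm ((h/2) *\<^sub>R (M *v D n)) \<le> m0 * norm (D n)"
    proof -
      have "norm ((h/2) *\<^sub>R (M *v D n)) = (h/2) * norm (M *v D n)" using h by simp
      also have "\<dots> \<le> 1 * norm (M *v D n)" using h by (intro mult_right_mono) auto
      finally show ?thesis using Mb[of "D n"] by simp
    qed
    finally have a2: "norm (Q n) \<le> norm (V n) + m0 * norm (D n)" by simp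
    show ?thesis using a1 a2 unfolding R_def by (simp add: algebra_simps)
  qed
  show ?thesis using fin gron[of n] unfolding R0 G_def by (simp add: add.assoc)
qed



lemma power_mean_sum:
  fixes x :: "'i \<Rightarrow> real"
  assumes S: "finite S" and nn: "\<And>i. i \<in> S \<Longrightarrow> 0 \<le> x i" and k: "1 \<le> k"
  shows "(\<Sum>i\<in>S. x i) ^ k \<le> real (card S) ^ (k - 1) * (\<Sum>i\<in>S. x i ^ k)"
proof (cases "S = {}")
  case True then show ?thesis using k by (simp add: power_0_left)
next
  case False
  define n where "n = real (card S)"
  have n: "0 < n" unfolding n_def using S False by (simp add: card_gt_0_iff)
  have cvx: "convex_on {0..} (\<lambda>x::real. x ^ k)"
  proof (cases "even k")
    case True then show ?thesis using convex_power_even convex_on_subset by blast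
  next
    case False then show ?thesis using convex_power_odd by blast
  qed
  have "(\<Sum>i\<in>S. (1/n) *\<^sub>R x i) ^ k \<le> (\<Sum>i\<in>S. (1/n) * x i ^ k)"
    by (rule convex_on_sum[OF S False cvx]) (use n nn in \<open>auto simp: n_def\<close>)
  then have "((\<Sum>i\<in>S. x i) / n) ^ k \<le> (\<Sum>i\<in>S. x i ^ k) / n"
    by (simp add: sum_divide_distrib[symmetric] sum_distrib_left[symmetric] divide_inverse mult.commute)
  then have "(\<Sum>i\<in>S. x i) ^ k / n ^ k \<le> (\<Sum>i\<in>S. x i ^ k) / n" by (simp add: power_divide)
  then have "(\<Sum>i\<in>S. x i) ^ k \<le> (\<Sum>i\<in>S. x i ^ k) / n * n ^ k" using n by (simp add: divide_le_eq)
  also have "(\<Sum>i\<in>S. x i ^ k) / n * n ^ k = n ^ (k - 1) * (\<Sum>i\<in>S. x i ^ k)"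
  proof -
    have "n ^ k = n * n ^ (k - 1)" using k by (metis Suc_diff_le diff_Suc_1 power_Suc)
    then show ?thesis using n by simp
  qed
  finally show ?thesis unfolding n_def .
qed

lemma pow3:
  fixes x y z :: real
  assumes "0 \<le> x" "0 \<le> y" "0 \<le> z"
  shows "(x + y + z) ^ k \<le> 3 ^ k * (x ^ k + y ^ k + z ^ k)"
proof -
  define m where "m = max x (max y z)"
  have "x + y + z \<le> 3 * m" unfolding m_def by simp
  then have "(x + y + z) ^ k \<le> (3 * m) ^ k" using assms by (intro power_mono) auto
  also have "\<dots> = 3 ^ k * m ^ k" by (simp add: power_mult_distrib)
  also have "m ^ k \<le> x ^ k + y ^ k + z ^ k"
    unfolding m_def using assms by (auto simp: max_def)
  finally show ?thesis by simp
qed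

lemma pow2le:
  fixes x y :: real
  assumes "0 \<le> x" "0 \<le> y"
  shows "x ^ k + y ^ k \<le> 2 * (x + y) ^ k"
proof -
  have "x ^ k \<le> (x + y) ^ k" using assms by (intro power_mono) auto
  moreover have "y ^ k \<le> (x + y) ^ k" using assms by (intro power_mono) auto
  ultimately show ?thesis by simp
qed



lemma pathwise:
  fixes W :: "real \<Rightarrow> 'a \<Rightarrow> real^'m"
    and F :: "real^'d \<Rightarrow> real"
    and M :: "real^'d^'d"
    and \<sigma> :: "real^'m^'d"
    and v T L Cf h :: real
    and p q :: "real^'d"
    and k N n :: nat
  assumes F: "smooth_fun F"
    and v: "v > 0"
    and L: "L \<ge> 0" and Cf: "Cf \<ge> 0"
    and lip: "\<forall>q1 q2. norm (grad F q1 - grad F q2) \<le> L * norm (q1 - q2)"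
    and growth: "\<forall>x. norm (grad F x) \<le> Cf * (1 + norm x)"
    and T: "T > 0"
    and m0: "m0 = (\<Sum>i\<in>UNIV. \<Sum>j\<in>UNIV. \<bar>M$i$j\<bar>)"
    and s0: "s0 = (\<Sum>i\<in>UNIV. \<Sum>j\<in>UNIV. \<bar>\<sigma>$i$j\<bar>)"
    and hpos: "0 < h" and h1: "h \<le> 1" and hv: "v * h \<le> 1"
    and hb: "h * (real CARD('d) * real CARD('d) * L * m0) \<le> 1"
    and N: "real N * h = T" and n: "n \<le> N" and k: "1 \<le> k"
    and K: "K = Cf*(1+m0)*(1+m0) + 2*(2 + Cf*(1+m0))*(1 + exp v *m0) + v"
    and B: "B = exp (K * T)"
    and c1: "c1 = B * (norm p + norm q + K * T)"
    and c2: "c2 = (1 + m0) * s0"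
    and c3: "c3 = 2 * B * K * s0"
  shows "norm (fst (scheme h v M \<sigma> F p q W n \<omega>)) ^ k + norm (snd (scheme h v M \<sigma> F p q W n \<omega>)) ^ k
     \<le> 2 * 3^k * (c1^k + c2^k * norm (W (real n * h) \<omega> - W 0 \<omega>) ^ k
          + c3^k * h * (T + 1)^(k - 1) * (\<Sum>j\<le>n. norm (W (real j * h) \<omega> - W 0 \<omega>) ^ k))"
proof -
  define P where "P = (\<lambda>j. fst (scheme h v M \<sigma> F p q W j \<omega>))"
  define Q where "Q = (\<lambda>j. snd (scheme h v M \<sigma> F p q W j \<omega>))"
  define D where "D = (\<lambda>j::nat. \<sigma> *v (W (real j * h) \<omega> - W 0 \<omega>))"
  define X where "X = (\<lambda>j::nat. norm (W (real j * h) \<omega> - W 0 \<omega>))"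
  define \<beta>H where "\<beta>H = real CARD('d) * real CARD('d) * L"
  define E where "E = (\<lambda>j. (h^2/2) *\<^sub>R (hess F (Q j) ** M))"
  define \<epsilon> where "\<epsilon> = h^2/2 * (\<beta>H * m0)"
  have m0nn: "0 \<le> m0" unfolding m0 by (simp add: sum_nonneg)
  have s0nn: "0 \<le> s0" unfolding s0 by (simp add: sum_nonneg)
  have bHnn: "0 \<le> \<beta>H" unfolding \<beta>H_def using L by simp
  have Mb: "\<And>x. norm (M *v x) \<le> m0 * norm x" unfolding m0 by (rule mat_norm_bound)
  have Sb: "\<And>x. norm (\<sigma> *v x) \<le> s0 * norm x" unfolding s0 by (rule mat_norm_bound)
  have Hb: "\<And>y x. norm (hess F y *v x) \<le> \<beta>H * norm x"
  proof -
    fix y x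
    have "norm (hess F y *v x) \<le> (\<Sum>i\<in>UNIV. \<Sum>j\<in>UNIV. \<bar>hess F y $ i $ j\<bar>) * norm x"
      by (rule mat_norm_bound)
    also have "(\<Sum>i\<in>UNIV. \<Sum>j\<in>UNIV. \<bar>hess F y $ i $ j\<bar>) \<le> (\<Sum>i\<in>(UNIV::'d set). \<Sum>j\<in>(UNIV::'d set). L)"
      by (intro sum_mono hess_entry_bound[OF F lip])
    also have "\<dots> = \<beta>H" unfolding \<beta>H_def by simp
    finally show "norm (hess F y *v x) \<le> \<beta>H * norm x" by (simp add: mult_right_mono)
  qed
  have Eb: "\<And>j x. norm (E j *v x) \<le> \<epsilon> * norm x"
  proof -
    fix j x
    have "E j *v x = (h^2/2) *\<^sub>R (hess F (Q j) *v (M *v x))"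
      unfolding E_def by (simp add: scaleR_matrix_vector_assoc[symmetric] matrix_vector_mul_assoc)
    then have "norm (E j *v x) = (h^2/2) * norm (hess F (Q j) *v (M *v x))" by simp
    also have "\<dots> \<le> (h^2/2) * (\<beta>H * (m0 * norm x))"
      using Hb[of "Q j" "M *v x"] Mb[of x] bHnn
      by (intro mult_left_mono) (auto intro: order_trans mult_left_mono)
    finally show "norm (E j *v x) \<le> \<epsilon> * norm x" unfolding \<epsilon>_def by (simp add: mult_ac)
  qed
  have eps0: "0 \<le> \<epsilon>" unfolding \<epsilon>_def using bHnn m0nn by simp
  have epsh: "\<epsilon> \<le> h/2"
  proof -
    have "\<epsilon> = (h/2) * (h * (\<beta>H * m0))" unfolding \<epsilon>_def by (simp add: power2_eq_square)
    also have "\<dots> \<le> (h/2) * 1" using hb hpos unfolding \<beta>H_def by (intro mult_left_mono) (auto simp: mult_ac)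
    finally show ?thesis by simp
  qed
  have dD: "\<And>j. \<sigma> *v (W (real (Suc j) * h) \<omega> - W (real j * h) \<omega>) = D (Suc j) - D j"
    unfolding D_def by (simp add: matrix_vector_mult_diff_distrib)
  have sc: "\<And>j. scheme h v M \<sigma> F p q W (Suc j) \<omega> =
     (matrix_inv (mat 1 + E j) *v
        (exp (- v * h) *\<^sub>R P j - (h * (1 + v * h / 2) * exp (- v * h)) *\<^sub>R grad F (Q j)
         - ((1 + v * h / 2) * exp (- v * h)) *\<^sub>R (D (Suc j) - D j)),
      Q j + (h * (1 - v * h / 2) * exp (v * h)) *\<^sub>R (M *v (matrix_inv (mat 1 + E j) *v
        (exp (- v * h) *\<^sub>R P j - (h * (1 + v * h / 2) * exp (- v * h)) *\<^sub>R grad F (Q j)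
         - ((1 + v * h / 2) * exp (- v * h)) *\<^sub>R (D (Suc j) - D j))))
        + (h^2 / 2) *\<^sub>R (M *v grad F (Q j)) + (h / 2) *\<^sub>R (M *v (D (Suc j) - D j)))"
    unfolding P_def Q_def E_def by (simp add: Let_def dD del: of_nat_Suc)
  define y where "y = (\<lambda>j. exp (- v * h) *\<^sub>R P j - (h * (1 + v * h / 2) * exp (- v * h)) *\<^sub>R grad F (Q j)
         - ((1 + v * h / 2) * exp (- v * h)) *\<^sub>R (D (Suc j) - D j))"
  have scP: "\<And>j. P (Suc j) = matrix_inv (mat 1 + E j) *v y j"
  proof -
    fix j
    have "P (Suc j) = fst (scheme h v M \<sigma> F p q W (Suc j) \<omega>)" unfolding P_def ..
    also have "\<dots> = matrix_inv (mat 1 + E j) *v y j" unfolding sc y_def by simp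
    finally show "P (Suc j) = matrix_inv (mat 1 + E j) *v y j" .
  qed
  have r1: "\<And>j. P (Suc j) + E j *v P (Suc j) = exp (- v * h) *\<^sub>R P j - (h * (1 + v * h / 2) * exp (- v * h)) *\<^sub>R grad F (Q j)
         - ((1 + v * h / 2) * exp (- v * h)) *\<^sub>R (D (Suc j) - D j)"
  proof -
    fix j
    have e12: "\<epsilon> \<le> 1/2" using epsh h1 by simp
    have "matrix_inv (mat 1 + E j) *v y j + E j *v (matrix_inv (mat 1 + E j) *v y j) = y j"
      by (rule inv_step) (use Eb e12 in auto)
    then show "?thesis j" by (simp only: scP y_def)
  qed
  have r2: "\<And>j. Q (Suc j) = Q j + (h * (1 - v * h / 2) * exp (v * h)) *\<^sub>R (M *v P (Suc j)) + (h^2/2) *\<^sub>R (M *v grad F (Q j)) + (h/2) *\<^sub>R (M *v (D (Suc j) - D j))"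
  proof -
    fix j
    have "Q (Suc j) = snd (scheme h v M \<sigma> F p q W (Suc j) \<omega>)" unfolding Q_def ..
    also have "\<dots> = Q j + (h * (1 - v * h / 2) * exp (v * h)) *\<^sub>R (M *v (matrix_inv (mat 1 + E j) *v y j)) + (h^2/2) *\<^sub>R (M *v grad F (Q j)) + (h/2) *\<^sub>R (M *v (D (Suc j) - D j))"
      unfolding sc y_def by simp
    finally show "?thesis j" by (simp only: scP)
  qed
  have P0: "P 0 = p" and Q0: "Q 0 = q" and D0: "D 0 = 0" unfolding P_def Q_def D_def by simp_all
  have vh0: "0 \<le> v * h" using v hpos by simp
  have a0: "0 \<le> exp (- v * h)" and a1: "exp (- v * h) \<le> 1" and a2: "1 - exp (- v * h) \<le> v * h"
    using vh0 exp_ge_add_one_self[of "- v * h"] by auto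
  have c0: "0 \<le> (1 + v * h / 2) * exp (- v * h)" using vh0 by simp
  have c1': "(1 + v * h / 2) * exp (- v * h) \<le> 1"
  proof -
    have "1 + v * h / 2 \<le> exp (v * h)" using exp_ge_add_one_self[of "v * h"] vh0 by linarith
    then have "(1 + v * h / 2) * exp (- v * h) \<le> exp (v * h) * exp (- v * h)" by (intro mult_right_mono) auto
    also have "\<dots> = 1" by (simp add: exp_minus_inverse)
    finally show ?thesis .
  qed
  have b0: "0 \<le> h * (1 + v * h / 2) * exp (- v * h)" using c0 hpos by (simp add: mult.assoc)
  have b1: "h * (1 + v * h / 2) * exp (- v * h) \<le> h" using c1' hpos by (simp add: mult.assoc mult_left_le)
  have eb: "\<bar>h * (1 - v * h / 2) * exp (v * h)\<bar> \<le> h * exp v"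
  proof -
    have "\<bar>1 - v * h / 2\<bar> \<le> 1" using vh0 hv by simp
    moreover have "exp (v * h) \<le> exp v" using v h1 hpos by (simp add: mult_left_le)
    ultimately have "\<bar>1 - v * h / 2\<bar> * exp (v * h) \<le> 1 * exp v" by (intro mult_mono) auto
    then show ?thesis using hpos by (simp add: abs_mult mult.assoc mult_left_mono)
  qed
  have fb: "\<And>x. norm (grad F x) \<le> Cf * (1 + norm x)" using growth by blast
  have det: "norm (P n) + norm (Q n) \<le> (1 + h*K)^n * (norm p + norm q + h*K*(\<Sum>j<n. 1 + norm (D j) + norm (D (Suc j)))) + (1+m0) * norm (D n)"
    by (rule det_bound[where P=P and Q=Q and D=D and f="grad F" and E=E and M=M, OF r1 r2 P0 Q0 D0 Eb eps0 _ _ hpos h1 a0 a1 a2 c0 c1' b0 b1 eb _ fb Cf Mb m0nn _ K])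
       (use epsh hpos h1 v in auto)
  \<comment> \<open>now estimate\<close>
  have K0: "0 \<le> K" unfolding K using Cf m0nn v by simp
  have Xnn: "\<And>j. 0 \<le> X j" unfolding X_def by simp
  have nD: "\<And>j. norm (D j) \<le> s0 * X j" unfolding D_def X_def by (rule Sb)
  define S where "S = (\<Sum>j\<le>n. X j)"
  have Snn: "0 \<le> S" unfolding S_def using Xnn by (simp add: sum_nonneg)
  have nh: "real n * h \<le> T" using n N hpos by (metis mult_right_mono of_nat_le_iff less_imp_le)
  have powB: "(1 + h*K)^n \<le> B"
  proof -
    have "(1 + h*K)^n \<le> exp (h*K)^n" using K0 hpos by (intro power_mono) auto
    also have "\<dots> = exp (real n * (h*K))" by (simp add: exp_of_nat_mult)
    also have "\<dots> \<le> exp (K * T)"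
    proof -
      have "K * (real n * h) \<le> K * T" using nh K0 by (rule mult_left_mono)
      then show ?thesis by (simp add: mult_ac)
    qed
    finally show ?thesis unfolding B .
  qed
  have sumD: "(\<Sum>j<n. 1 + norm (D j) + norm (D (Suc j))) \<le> real n + 2 * s0 * S"
  proof -
    have "(\<Sum>j<n. 1 + norm (D j) + norm (D (Suc j))) \<le> (\<Sum>j<n. 1 + s0 * X j + s0 * X (Suc j))"
      by (intro sum_mono add_mono nD) simp
    also have "\<dots> = real n + s0 * (\<Sum>j<n. X j) + s0 * (\<Sum>j<n. X (Suc j))"
      by (simp add: sum.distrib sum_distrib_left)
    moreover have x1: "(\<Sum>j<n. X j) \<le> S" unfolding S_def using Xnn by (intro sum_mono2) auto
    moreover have x2: "(\<Sum>j<n. X (Suc j)) \<le> S"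
    proof -
      have "(\<Sum>j<Suc n. X j) = X 0 + (\<Sum>j<n. X (Suc j))" by (rule sum.lessThan_Suc_shift)
      then show ?thesis unfolding S_def using Xnn[of 0] lessThan_Suc_atMost by simp
    qed
    moreover have "s0 * (\<Sum>j<n. X j) \<le> s0 * S" using x1 s0nn by (rule mult_left_mono)
    moreover have "s0 * (\<Sum>j<n. X (Suc j)) \<le> s0 * S" using x2 s0nn by (rule mult_left_mono)
    ultimately show ?thesis by linarith
  qed
  define Z where "Z = norm (P n) + norm (Q n)"
  have Zb: "Z \<le> c1 + c2 * X n + c3 * (h * S)"
  proof -
    have in0: "0 \<le> norm p + norm q + h*K*(\<Sum>j<n. 1 + norm (D j) + norm (D (Suc j)))"
      using K0 hpos by (intro add_nonneg_nonneg mult_nonneg_nonneg sum_nonneg) auto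
    have "h*K*(\<Sum>j<n. 1 + norm (D j) + norm (D (Suc j))) \<le> h*K*(real n + 2 * s0 * S)"
      using sumD K0 hpos by (intro mult_left_mono) auto
    also have "\<dots> = K * (real n * h) + 2 * K * s0 * (h * S)" by (simp add: algebra_simps)
    also have "\<dots> \<le> K * T + 2 * K * s0 * (h * S)" using mult_left_mono[OF nh K0] by simp
    finally have i1: "h*K*(\<Sum>j<n. 1 + norm (D j) + norm (D (Suc j))) \<le> K * T + 2 * K * s0 * (h * S)" .
    have "Z \<le> (1 + h*K)^n * (norm p + norm q + h*K*(\<Sum>j<n. 1 + norm (D j) + norm (D (Suc j)))) + (1+m0) * norm (D n)"
      using det unfolding Z_def .
    also have "(1 + h*K)^n * (norm p + norm q + h*K*(\<Sum>j<n. 1 + norm (D j) + norm (D (Suc j))))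
        \<le> B * (norm p + norm q + (K * T + 2 * K * s0 * (h * S)))"
      using powB in0 i1 by (intro mult_mono) (auto simp: B)
    also have "(1+m0) * norm (D n) \<le> (1+m0) * (s0 * X n)" using nD m0nn by (intro mult_left_mono) auto
    finally show ?thesis unfolding c1 c2 c3 by (simp add: algebra_simps)
  qed
  have c1nn: "0 \<le> c1" unfolding c1 B using K0 T by simp
  have c2nn: "0 \<le> c2" unfolding c2 using m0nn s0nn by simp
  have c3nn: "0 \<le> c3" unfolding c3 B using K0 s0nn by simp
  have "norm (P n) ^ k + norm (Q n) ^ k \<le> 2 * Z ^ k" unfolding Z_def by (rule pow2le) auto
  also have "Z ^ k \<le> (c1 + c2 * X n + c3 * (h * S)) ^ k"
    using Zb by (intro power_mono) (auto simp: Z_def)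
  also have "\<dots> \<le> 3 ^ k * (c1 ^ k + (c2 * X n) ^ k + (c3 * (h * S)) ^ k)"
    using c1nn c2nn c3nn Xnn[of n] Snn hpos by (intro pow3) auto
  also have "(c3 * (h * S)) ^ k \<le> c3 ^ k * h * (T + 1) ^ (k - 1) * (\<Sum>j\<le>n. X j ^ k)"
  proof -
    have pm: "S ^ k \<le> real (Suc n) ^ (k - 1) * (\<Sum>j\<le>n. X j ^ k)"
      using power_mean_sum[of "{..n}" X k] Xnn k unfolding S_def by simp
    have hk: "h ^ k = h * h ^ (k - 1)" using k by (metis Suc_diff_le diff_Suc_1 power_Suc)
    have "(c3 * (h * S)) ^ k = c3 ^ k * h ^ k * S ^ k" by (simp add: power_mult_distrib)
    also have "\<dots> \<le> c3 ^ k * h ^ k * (real (Suc n) ^ (k - 1) * (\<Sum>j\<le>n. X j ^ k))"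
      using pm c3nn hpos by (intro mult_left_mono) auto
    also have "\<dots> = c3 ^ k * h * (h * real (Suc n)) ^ (k - 1) * (\<Sum>j\<le>n. X j ^ k)"
      by (simp add: hk power_mult_distrib mult_ac)
    also have "(h * real (Suc n)) ^ (k - 1) \<le> (T + 1) ^ (k - 1)"
    proof (rule power_mono)
      show "h * real (Suc n) \<le> T + 1" using nh h1 by (simp add: algebra_simps)
    qed (use hpos in simp)
    finally show ?thesis using c3nn hpos Xnn by (simp add: mult_left_mono mult_right_mono sum_nonneg)
  qed
  finally show ?thesis
    unfolding P_def Q_def X_def by (simp add: power_mult_distrib algebra_simps)
qed



theorem theorem4p2:
  fixes \<Omega> :: "'a measure"
    and W :: "real \<Rightarrow> 'a \<Rightarrow> real^'m"
    and F :: "real^'d \<Rightarrow> real"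
    and M :: "real^'d^'d"
    and \<sigma> :: "real^'m^'d"
    and v T L Cf :: real
    and p q :: "real^'d"
    and k :: nat
  assumes dm: "CARD('d) \<le> CARD('m)"
    and W: "wiener_process \<Omega> W"
    and F: "smooth_fun F"
    and M: "sym_pos_def_mat M"
    and v: "v > 0"
    and L: "L \<ge> 0" and Cf: "Cf \<ge> 0"
    and lip: "\<forall>q1 q2. norm (grad F q1 - grad F q2) \<le> L * norm (q1 - q2)"
    and growth: "\<forall>x. norm (grad F x) \<le> Cf * (1 + norm x)"
    and T: "T > 0"
  shows "\<exists>h0 > 0. \<exists>C :: real. \<forall>h (N :: nat). 0 < h \<longrightarrow> h \<le> h0 \<longrightarrow> real N * h = T \<longrightarrow>
           (\<forall>n \<in> {1..N}.
              (\<integral>\<^sup>+ \<omega>. ennreal (norm (fst (scheme h v M \<sigma> F p q W n \<omega>)) ^ k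
                              + norm (snd (scheme h v M \<sigma> F p q W n \<omega>)) ^ k) \<partial>\<Omega>)
              \<le> ennreal C)"
proof -
  have ps: "prob_space \<Omega>" and Wm: "\<And>t. W t \<in> borel_measurable \<Omega>"
    and Wd: "\<And>s t. 0 \<le> s \<Longrightarrow> s < t \<Longrightarrow> distributed \<Omega> lborel (\<lambda>\<omega>. W t \<omega> - W s \<omega>)
          (\<lambda>x. ennreal (\<Prod>i\<in>UNIV. normal_density 0 (sqrt (t - s)) (x $ i)))"
    using W unfolding wiener_process_def by auto
  interpret prob_space \<Omega> by (rule ps)
  have sp1: "emeasure \<Omega> (space \<Omega>) = 1" by (rule emeasure_space_1)
  show ?thesis
  proof (cases "k = 0")
    case True
    show ?thesis
    proof (rule exI[of _ 1], rule conjI, simp, rule exI[of _ 2], intro allI impI ballI)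
      fix h :: real and N n :: nat
      show "(\<integral>\<^sup>+ \<omega>. ennreal (norm (fst (scheme h v M \<sigma> F p q W n \<omega>)) ^ k
                              + norm (snd (scheme h v M \<sigma> F p q W n \<omega>)) ^ k) \<partial>\<Omega>) \<le> ennreal 2"
        using True sp1 by simp
    qed
  next
    case False
    then have k: "1 \<le> k" by simp
    define m0 where "m0 = (\<Sum>i\<in>UNIV. \<Sum>j\<in>UNIV. \<bar>M$i$j\<bar>)"
    define s0 where "s0 = (\<Sum>i\<in>UNIV. \<Sum>j\<in>UNIV. \<bar>\<sigma>$i$j\<bar>)"
    define \<beta> where "\<beta> = real CARD('d) * real CARD('d) * L * m0"
    define h0 where "h0 = min 1 (min (1 / (1 + v)) (1 / (1 + \<beta>)))"
    define K where "K = Cf*(1+m0)*(1+m0) + 2*(2 + Cf*(1+m0))*(1 + exp v * m0) + v"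
    define B where "B = exp (K * T)"
    define c1 where "c1 = B * (norm p + norm q + K * T)"
    define c2 where "c2 = (1 + m0) * s0"
    define c3 where "c3 = 2 * B * K * s0"
    define Cm where "Cm = real CARD('m) ^ k * (real CARD('m) * (1 + fact (2 * k) * T ^ k))"
    define C where "C = 2 * 3^k * (c1^k + c2^k * Cm + c3^k * (T + 1)^k * Cm)"
    have m0nn: "0 \<le> m0" unfolding m0_def by (simp add: sum_nonneg)
    have \<beta>nn: "0 \<le> \<beta>" unfolding \<beta>_def using L m0nn by simp
    have h0pos: "0 < h0" unfolding h0_def using v \<beta>nn by simp
    have Cmnn: "0 \<le> Cm" unfolding Cm_def using T by simp
    show ?thesis
    proof (rule exI[of _ h0], rule conjI[OF h0pos], rule exI[of _ C], intro allI impI ballI)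
      fix h :: real and N n :: nat
      assume hpos: "0 < h" and hh0: "h \<le> h0" and N: "real N * h = T" and n: "n \<in> {1..N}"
      have h1: "h \<le> 1" using hh0 unfolding h0_def by simp
      have hv: "v * h \<le> 1"
      proof -
        have "h \<le> 1 / (1 + v)" using hh0 unfolding h0_def by simp
        then have "h * (1 + v) \<le> 1" using v by (simp add: le_divide_eq)
        then show ?thesis using hpos by (simp add: algebra_simps)
      qed
      have hb: "h * (real CARD('d) * real CARD('d) * L * m0) \<le> 1"
      proof -
        have "h \<le> 1 / (1 + \<beta>)" using hh0 unfolding h0_def by simp
        then have "h * (1 + \<beta>) \<le> 1" using \<beta>nn by (simp add: le_divide_eq)
        then show ?thesis using hpos unfolding \<beta>_def by (simp add: algebra_simps)
      qed
      have nN: "n \<le> N" using n by simp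
      have nh: "real n * h \<le> T" using nN N hpos by (metis mult_right_mono of_nat_le_iff less_imp_le)
      define X where "X = (\<lambda>j::nat. \<lambda>\<omega>. norm (W (real j * h) \<omega> - W 0 \<omega>))"
      define \<gamma> where "\<gamma> = 2 * 3^k * c3^k * h * (T + 1)^(k - 1)"
      define \<alpha> where "\<alpha> = 2 * 3^k * c1^k"
      define \<beta>1 where "\<beta>1 = 2 * 3^k * c2^k"
      have K0: "0 \<le> K" unfolding K_def using Cf m0nn v by simp
      have s0nn: "0 \<le> s0" unfolding s0_def by (simp add: sum_nonneg)
      have c1nn: "0 \<le> c1" unfolding c1_def B_def using K0 T by simp
      have c2nn: "0 \<le> c2" unfolding c2_def using m0nn s0nn by simp
      have c3nn: "0 \<le> c3" unfolding c3_def B_def using K0 s0nn by simp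
      have \<alpha>nn: "0 \<le> \<alpha>" and \<beta>1nn: "0 \<le> \<beta>1" and \<gamma>nn: "0 \<le> \<gamma>"
        unfolding \<alpha>_def \<beta>1_def \<gamma>_def using c1nn c2nn c3nn hpos T by simp_all
      have pw: "\<And>\<omega>. norm (fst (scheme h v M \<sigma> F p q W n \<omega>)) ^ k + norm (snd (scheme h v M \<sigma> F p q W n \<omega>)) ^ k
          \<le> \<alpha> + \<beta>1 * X n \<omega> ^ k + \<gamma> * (\<Sum>j\<le>n. X j \<omega> ^ k)"
      proof -
        fix \<omega>
        have "norm (fst (scheme h v M \<sigma> F p q W n \<omega>)) ^ k + norm (snd (scheme h v M \<sigma> F p q W n \<omega>)) ^ k
          \<le> 2 * 3^k * (c1^k + c2^k * norm (W (real n * h) \<omega> - W 0 \<omega>) ^ k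
            + c3^k * h * (T + 1)^(k - 1) * (\<Sum>j\<le>n. norm (W (real j * h) \<omega> - W 0 \<omega>) ^ k))"
          by (rule pathwise[OF F v L Cf lip growth T m0_def s0_def hpos h1 hv hb N nN k K_def B_def c1_def c2_def c3_def])
        then show "?thesis \<omega>" unfolding \<alpha>_def \<beta>1_def \<gamma>_def X_def by (simp add: algebra_simps)
      qed
      have Xm[measurable]: "\<And>j. (\<lambda>\<omega>. ennreal (X j \<omega> ^ k)) \<in> borel_measurable \<Omega>"
      proof -
        fix j
        have [measurable]: "W (real j * h) \<in> borel_measurable \<Omega>" "W 0 \<in> borel_measurable \<Omega>" by (rule Wm)+
        show "(\<lambda>\<omega>. ennreal (X j \<omega> ^ k)) \<in> borel_measurable \<Omega>" unfolding X_def by measurable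
      qed
      have mom: "\<And>j. j \<le> n \<Longrightarrow> (\<integral>\<^sup>+\<omega>. ennreal (X j \<omega> ^ k) \<partial>\<Omega>) \<le> ennreal Cm"
      proof -
        fix j assume jn: "j \<le> n"
        show "(\<integral>\<^sup>+\<omega>. ennreal (X j \<omega> ^ k) \<partial>\<Omega>) \<le> ennreal Cm"
        proof (cases "j = 0")
          case True
          then show ?thesis unfolding X_def using k by (simp add: power_0_left)
        next
          case False
          define t where "t = real j * h"
          have tpos: "0 < t" unfolding t_def using False hpos by simp
          have tT: "t \<le> T" unfolding t_def using jn nh hpos
            by (meson mult_right_mono of_nat_le_iff less_imp_le order_trans)
          have D: "distributed \<Omega> lborel (\<lambda>\<omega>. W t \<omega> - W 0 \<omega>)
              (\<lambda>x. ennreal (\<Prod>i\<in>UNIV. normal_density 0 (sqrt t) (x $ i)))"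
            using Wd[of 0 t] tpos by simp
          have "(\<integral>\<^sup>+\<omega>. ennreal (X j \<omega> ^ k) \<partial>\<Omega>) = (\<integral>\<^sup>+\<omega>. ennreal (norm (W t \<omega> - W 0 \<omega>) ^ k) \<partial>\<Omega>)"
            unfolding X_def t_def ..
          also have "\<dots> \<le> ennreal (real CARD('m) ^ k * (real CARD('m) * (1 + fact (2 * k) * sqrt t ^ (2 * k))))"
            by (rule gauss_vec_moment[OF D]) (use tpos in simp)
          also have "\<dots> \<le> ennreal Cm"
          proof (rule ennreal_leI)
            have "sqrt t ^ (2 * k) = t ^ k" using tpos by (simp add: power_mult)
            also have "\<dots> \<le> T ^ k" using tpos tT by (intro power_mono) auto
            finally have "sqrt t ^ (2 * k) \<le> T ^ k" .
            then show "real CARD('m) ^ k * (real CARD('m) * (1 + fact (2 * k) * sqrt t ^ (2 * k))) \<le> Cm"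
              unfolding Cm_def by (intro mult_left_mono add_left_mono) auto
          qed
          finally show ?thesis .
        qed
      qed
      have "(\<integral>\<^sup>+ \<omega>. ennreal (norm (fst (scheme h v M \<sigma> F p q W n \<omega>)) ^ k
                              + norm (snd (scheme h v M \<sigma> F p q W n \<omega>)) ^ k) \<partial>\<Omega>)
          \<le> (\<integral>\<^sup>+ \<omega>. (ennreal \<alpha> + ennreal \<beta>1 * ennreal (X n \<omega> ^ k) + ennreal \<gamma> * (\<Sum>j\<le>n. ennreal (X j \<omega> ^ k))) \<partial>\<Omega>)"
      proof (rule nn_integral_mono)
        fix \<omega>
        have nn: "0 \<le> X n \<omega> ^ k" "\<And>j. 0 \<le> X j \<omega> ^ k" unfolding X_def by simp_all
        have "ennreal (norm (fst (scheme h v M \<sigma> F p q W n \<omega>)) ^ k + norm (snd (scheme h v M \<sigma> F p q W n \<omega>)) ^ k)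
            \<le> ennreal (\<alpha> + \<beta>1 * X n \<omega> ^ k + \<gamma> * (\<Sum>j\<le>n. X j \<omega> ^ k))"
          by (rule ennreal_leI[OF pw])
        also have "\<dots> = ennreal \<alpha> + ennreal \<beta>1 * ennreal (X n \<omega> ^ k) + ennreal \<gamma> * (\<Sum>j\<le>n. ennreal (X j \<omega> ^ k))"
        proof -
          have s1: "0 \<le> (\<Sum>j\<le>n. X j \<omega> ^ k)" using nn by (simp add: sum_nonneg)
          have "ennreal (\<alpha> + \<beta>1 * X n \<omega> ^ k + \<gamma> * (\<Sum>j\<le>n. X j \<omega> ^ k))
              = ennreal \<alpha> + ennreal (\<beta>1 * X n \<omega> ^ k) + ennreal (\<gamma> * (\<Sum>j\<le>n. X j \<omega> ^ k))"
            using \<alpha>nn \<beta>1nn \<gamma>nn nn s1 by (simp add: ennreal_plus)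
          also have "ennreal (\<beta>1 * X n \<omega> ^ k) = ennreal \<beta>1 * ennreal (X n \<omega> ^ k)"
            using \<beta>1nn nn(1) by (rule ennreal_mult)
          also have "ennreal (\<gamma> * (\<Sum>j\<le>n. X j \<omega> ^ k)) = ennreal \<gamma> * ennreal (\<Sum>j\<le>n. X j \<omega> ^ k)"
            using \<gamma>nn s1 by (rule ennreal_mult)
          also have "ennreal (\<Sum>j\<le>n. X j \<omega> ^ k) = (\<Sum>j\<le>n. ennreal (X j \<omega> ^ k))"
            using nn by (intro sum_ennreal[symmetric]) auto
          finally show ?thesis .
        qed
        finally show "ennreal (norm (fst (scheme h v M \<sigma> F p q W n \<omega>)) ^ k + norm (snd (scheme h v M \<sigma> F p q W n \<omega>)) ^ k)
            \<le> ennreal \<alpha> + ennreal \<beta>1 * ennreal (X n \<omega> ^ k) + ennreal \<gamma> * (\<Sum>j\<le>n. ennreal (X j \<omega> ^ k))" .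
      qed
      also have "\<dots> = ennreal \<alpha> + ennreal \<beta>1 * (\<integral>\<^sup>+\<omega>. ennreal (X n \<omega> ^ k) \<partial>\<Omega>)
                       + ennreal \<gamma> * (\<Sum>j\<le>n. (\<integral>\<^sup>+\<omega>. ennreal (X j \<omega> ^ k) \<partial>\<Omega>))"
        by (simp add: nn_integral_add nn_integral_cmult nn_integral_sum sp1)
      also have "\<dots> \<le> ennreal \<alpha> + ennreal \<beta>1 * ennreal Cm + ennreal \<gamma> * (\<Sum>j\<le>n. ennreal Cm)"
        by (intro add_mono mult_left_mono sum_mono mom order_refl) auto
      also have "\<dots> = ennreal (\<alpha> + \<beta>1 * Cm + \<gamma> * (real (Suc n) * Cm))"
      proof -
        have "(\<Sum>j\<le>n. ennreal Cm) = ennreal (real (Suc n) * Cm)"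
          using Cmnn by (simp add: ennreal_mult ennreal_of_nat_eq_real_of_nat)
        moreover have "ennreal \<beta>1 * ennreal Cm = ennreal (\<beta>1 * Cm)" using \<beta>1nn Cmnn by (simp add: ennreal_mult)
        moreover have "ennreal \<gamma> * ennreal (real (Suc n) * Cm) = ennreal (\<gamma> * (real (Suc n) * Cm))"
          using \<gamma>nn Cmnn by (simp add: ennreal_mult)
        moreover have "ennreal \<alpha> + ennreal (\<beta>1 * Cm) + ennreal (\<gamma> * (real (Suc n) * Cm))
            = ennreal (\<alpha> + \<beta>1 * Cm + \<gamma> * (real (Suc n) * Cm))"
          using \<alpha>nn \<beta>1nn \<gamma>nn Cmnn by (simp add: ennreal_plus)
        ultimately show ?thesis by simp
      qed
      also have "\<dots> \<le> ennreal C"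
      proof (rule ennreal_leI)
        have g: "\<gamma> * real (Suc n) \<le> 2 * 3^k * c3^k * (T + 1)^k"
        proof -
          define A where "A = 2 * 3^k * c3^k * (T + 1)^(k - 1)"
          have A0: "0 \<le> A" unfolding A_def using c3nn T by simp
          have e: "(T + 1)^(k - 1) * (T + 1) = (T + 1)^k"
            using k by (metis Suc_diff_le diff_Suc_1 power_Suc2)
          have "\<gamma> * real (Suc n) = A * (h * real (Suc n))"
            unfolding \<gamma>_def A_def by (simp add: mult_ac)
          also have "\<dots> \<le> A * (T + 1)"
            using nh h1 A0 by (intro mult_left_mono) (auto simp: algebra_simps)
          also have "A * (T + 1) = 2 * 3^k * c3^k * ((T + 1)^(k - 1) * (T + 1))"
            unfolding A_def by (simp add: mult_ac)
          also have "\<dots> = 2 * 3^k * c3^k * (T + 1)^k" by (simp only: e)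
          finally show ?thesis .
        qed
        have "\<alpha> + \<beta>1 * Cm + \<gamma> * (real (Suc n) * Cm) = \<alpha> + \<beta>1 * Cm + (\<gamma> * real (Suc n)) * Cm"
          by (simp add: mult_ac)
        also have "\<dots> \<le> \<alpha> + \<beta>1 * Cm + (2 * 3^k * c3^k * (T + 1)^k) * Cm"
          using g Cmnn by (intro add_left_mono mult_right_mono) auto
        also have "\<dots> = C" unfolding C_def \<alpha>_def \<beta>1_def by (simp add: algebra_simps)
        finally show "\<alpha> + \<beta>1 * Cm + \<gamma> * (real (Suc n) * Cm) \<le> C" .
      qed
      finally show "(\<integral>\<^sup>+ \<omega>. ennreal (norm (fst (scheme h v M \<sigma> F p q W n \<omega>)) ^ k
                              + norm (snd (scheme h v M \<sigma> F p q W n \<omega>)) ^ k) \<partial>\<Omega>) \<le> ennreal C" .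
    qed
  qed
qed


end
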